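(* For all integers $k,\ell_1,\ell_2\ge 0$ with $\ell_1+\ell_2\ge k>0$, \[ y_{k,\ell_1,\ell_2}=y_{k-1,\ell_1,\ell_2}+y_{k,\ell_1-1,\ell_2}+(2\ell_2+\ell_1+k-1)\,y_{k,\ell_1,\ell_2-1}, \] and moreover $y_{0,0,0}=1$.
   Context: For integers $k,\ell_1,\ell_2\ge 0$ with $N:=\ell_1+\ell_2\ge k$, a Young tableau with walls and holes of type $(k,\ell_1,\ell_2)$ consists of a subset $S\subseteq\{1,\dots,N\}$ with $|S|=\ell_2$ together with a bijective filling of the cells of the following three-row shape with the integers $1,\dots,k+\ell_1+2\ell_2$: the top row has cells in columns $1,\dots,k$, the middle row has cells in columns $1,\dots,N$, and the bottom row has cells exactly in the columns belonging to $S$. The filling must increase from left to right along the top row and along the middle row, and increase from bottom to top within every column; no condition is imposed among entries of the bottom row. $y_{k,\ell_1,\ell_2}$ is the number of such tableaux (pairs $(S,\text{filling})$). By convention $y_{k,\ell_1,\ell_2}=0$ if some index is negative or if $k>\ell_1+\ell_2$. *)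

theory Defs
  imports Main
begin

definition ww_cells :: "nat \<Rightarrow> nat \<Rightarrow> nat set \<Rightarrow> (nat \<times> nat) set" where
  "ww_cells k N S = {(1, j) | j. j \<in> {1..k}} \<union> {(2, j) | j. j \<in> {1..N}} \<union> {(3, j) | j. j \<in> S}"

text \<open>Tableaux with walls and holes of type (k,l1,l2): pairs (S, f) with f a bijective filling
  (extended by 0 outside the shape, so that the set is finite).\<close>
definition ww_tableaux :: "nat \<Rightarrow> nat \<Rightarrow> nat \<Rightarrow> (nat set \<times> (nat \<times> nat \<Rightarrow> nat)) set" where
  "ww_tableaux k l1 l2 =
     {(S, f). S \<subseteq> {1..l1 + l2} \<and> card S = l2 \<and>
        bij_betw f (ww_cells k (l1 + l2) S) {1..k + l1 + 2 * l2} \<and>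
        (\<forall>c. c \<notin> ww_cells k (l1 + l2) S \<longrightarrow> f c = 0) \<and>
        (\<forall>i j. 1 \<le> i \<and> i < j \<and> j \<le> k \<longrightarrow> f (1, i) < f (1, j)) \<and>
        (\<forall>i j. 1 \<le> i \<and> i < j \<and> j \<le> l1 + l2 \<longrightarrow> f (2, i) < f (2, j)) \<and>
        (\<forall>j. 1 \<le> j \<and> j \<le> k \<longrightarrow> f (2, j) < f (1, j)) \<and>
        (\<forall>j \<in> S. f (3, j) < f (2, j))}"

definition y :: "int \<Rightarrow> int \<Rightarrow> int \<Rightarrow> nat" where
  "y k l1 l2 = (if k < 0 \<or> l1 < 0 \<or> l2 < 0 \<or> k > l1 + l2 then 0
                else card (ww_tableaux (nat k) (nat l1) (nat l2)))"

end

theory Submission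
  imports Defs
begin

lemma bij_ins:
  assumes "bij_betw f A B" "a \<notin> A" "f a \<notin> B"
  shows "bij_betw f (insert a A) (insert (f a) B)"
  using assms by (simp add: bij_betw_def)
lemma bij_rem:
  assumes "bij_betw f A B" "a \<in> A"
  shows "bij_betw f (A - {a}) (B - {f a})"
  using assms by (metis bij_betw_DiffI bij_betw_singletonI empty_subsetI insert_subset bij_betw_apply)
lemma bij_range:
  assumes "bij_betw f C {1..n::nat}" "c \<in> C"
  shows "1 \<le> f c \<and> f c \<le> n"
  using bij_betw_apply[OF assms] by simp
lemma bij_inj:
  assumes "bij_betw f C B" "c \<in> C" "d \<in> C" "c \<noteq> d"
  shows "f c \<noteq> f d"
  using assms unfolding bij_betw_def inj_on_def by blast
lemma bij_surj:
  assumes "bij_betw f C B" "b \<in> B"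
  shows "\<exists>c\<in>C. f c = b"
  using assms unfolding bij_betw_def by blast
definition hh :: "nat \<Rightarrow> nat \<Rightarrow> nat" where "hh v x = (if x < v then x else x - 1)"
definition ee :: "nat \<Rightarrow> nat \<Rightarrow> nat" where "ee v x = (if x < v then x else x + 1)"

lemma hh_bij:
  assumes "1 \<le> v" "v \<le> m"
  shows "bij_betw (hh v) ({1..m} - {v}) {1..m-1}"
  by (rule bij_betw_byWitness[where f'="ee v"]) (use assms in \<open>auto simp: hh_def ee_def\<close>)

lemma ee_bij:
  assumes "1 \<le> v" "v \<le> m"
  shows "bij_betw (ee v) {1..m-1} ({1..m} - {v})"
  by (rule bij_betw_byWitness[where f'="hh v"]) (use assms in \<open>auto simp: hh_def ee_def\<close>)

lemma hh_mono: "x < z \<Longrightarrow> x \<noteq> v \<Longrightarrow> z \<noteq> v \<Longrightarrow> hh v x < hh v z"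
  by (auto simp: hh_def)
lemma ee_mono: "x < z \<Longrightarrow> ee v x < ee v z"
  by (auto simp: ee_def)
lemma ee_hh: "x \<noteq> v \<Longrightarrow> ee v (hh v x) = x"
  by (auto simp: hh_def ee_def)
lemma hh_ee: "hh v (ee v x) = x"
  by (auto simp: hh_def ee_def)
lemma ee_0: "0 < v \<Longrightarrow> ee v 0 = 0" by (auto simp: ee_def)
lemma ee_le: "ee v x \<le> x + 1" by (auto simp: ee_def)

lemma mem_cells[simp]: "(a,b) \<in> ww_cells k N S \<longleftrightarrow> (a=1 \<and> 1\<le>b \<and> b\<le>k) \<or> (a=2 \<and> 1\<le>b \<and> b\<le>N) \<or> (a=3 \<and> b\<in>S)"
  by (auto simp: ww_cells_def)

lemma mem_W: "(S,f) \<in> ww_tableaux k l1 l2 \<longleftrightarrow> S \<subseteq> {1..l1 + l2} \<and> card S = l2 \<and>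
        bij_betw f (ww_cells k (l1 + l2) S) {1..k + l1 + 2 * l2} \<and>
        (\<forall>c. c \<notin> ww_cells k (l1 + l2) S \<longrightarrow> f c = 0) \<and>
        (\<forall>i j. 1 \<le> i \<and> i < j \<and> j \<le> k \<longrightarrow> f (1, i) < f (1, j)) \<and>
        (\<forall>i j. 1 \<le> i \<and> i < j \<and> j \<le> l1 + l2 \<longrightarrow> f (2, i) < f (2, j)) \<and>
        (\<forall>j. 1 \<le> j \<and> j \<le> k \<longrightarrow> f (2, j) < f (1, j)) \<and>
        (\<forall>j \<in> S. f (3, j) < f (2, j))"
  by (simp add: ww_tableaux_def)

lemma W_finite: "finite (ww_tableaux k l1 l2)"
proof -
  let ?D = "{1::nat..3} \<times> {1..k + l1 + l2}"
  let ?F = "{f. \<forall>x. (x \<in> ?D \<longrightarrow> f x \<in> {0..k + l1 + 2*l2}) \<and> (x \<notin> ?D \<longrightarrow> f x = 0)}"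
  have "finite ?F" by (rule finite_set_of_finite_funs) auto
  moreover have "ww_tableaux k l1 l2 \<subseteq> Pow {1..l1+l2} \<times> ?F"
  proof
    fix p assume p: "p \<in> ww_tableaux k l1 l2"
    obtain S f where pe: "p = (S,f)" by (cases p)
    have S: "S \<subseteq> {1..l1+l2}" and b: "bij_betw f (ww_cells k (l1 + l2) S) {1..k + l1 + 2 * l2}"
      and z: "\<forall>c. c \<notin> ww_cells k (l1 + l2) S \<longrightarrow> f c = 0" using p pe mem_W by auto
    have "f \<in> ?F"
    proof -
      have "f x \<in> {0..k + l1 + 2*l2}" for x
        using bij_range[OF b, of x] z[rule_format, of x] by (cases "x \<in> ww_cells k (l1 + l2) S") simp_all
      moreover have "x \<notin> ?D \<Longrightarrow> f x = 0" for x
      proof -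
        assume "x \<notin> ?D"
        then have "x \<notin> ww_cells k (l1 + l2) S" using S by (cases x) auto
        then show "f x = 0" using z by blast
      qed
      ultimately show ?thesis by blast
    qed
    then show "p \<in> Pow {1..l1+l2} \<times> ?F" using S pe by auto
  qed
  ultimately show ?thesis by (meson finite_Pow_iff finite_SigmaI finite_atLeastAtMost finite_subset)
qed



lemma W_I:
  assumes "S \<subseteq> {1..l1 + l2}" "card S = l2"
    "bij_betw f (ww_cells k (l1 + l2) S) {1..k + l1 + 2 * l2}"
    "\<And>c. c \<notin> ww_cells k (l1 + l2) S \<Longrightarrow> f c = 0"
    "\<And>i j. 1 \<le> i \<Longrightarrow> i < j \<Longrightarrow> j \<le> k \<Longrightarrow> f (1, i) < f (1, j)"
    "\<And>i j. 1 \<le> i \<Longrightarrow> i < j \<Longrightarrow> j \<le> l1 + l2 \<Longrightarrow> f (2, i) < f (2, j)"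
    "\<And>j. 1 \<le> j \<Longrightarrow> j \<le> k \<Longrightarrow> f (2, j) < f (1, j)"
    "\<And>j. j \<in> S \<Longrightarrow> f (3, j) < f (2, j)"
  shows "(S,f) \<in> ww_tableaux k l1 l2"
  unfolding mem_W using assms by blast

lemma W_E:
  assumes "(S,f) \<in> ww_tableaux k l1 l2"
  obtains "S \<subseteq> {1..l1 + l2}" "card S = l2"
    "bij_betw f (ww_cells k (l1 + l2) S) {1..k + l1 + 2 * l2}"
    "\<And>c. c \<notin> ww_cells k (l1 + l2) S \<Longrightarrow> f c = 0"
    "\<And>i j. 1 \<le> i \<Longrightarrow> i < j \<Longrightarrow> j \<le> k \<Longrightarrow> f (1, i) < f (1, j)"
    "\<And>i j. 1 \<le> i \<Longrightarrow> i < j \<Longrightarrow> j \<le> l1 + l2 \<Longrightarrow> f (2, i) < f (2, j)"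
    "\<And>j. 1 \<le> j \<Longrightarrow> j \<le> k \<Longrightarrow> f (2, j) < f (1, j)"
    "\<And>j. j \<in> S \<Longrightarrow> f (3, j) < f (2, j)"
  using assms unfolding mem_W by blast




lemma A_bij:
  assumes k1: "1 \<le> k" and kN: "k \<le> l1 + l2"
  shows "bij_betw (\<lambda>(S,f). (S, f((1,k):=0)))
           {(S,f) \<in> ww_tableaux k l1 l2. f (1,k) = k+l1+2*l2} (ww_tableaux (k-1) l1 l2)"
proof (rule bij_betw_byWitness[where f'="\<lambda>(S,g). (S, g((1,k):=k+l1+2*l2))"])
  show "\<forall>a\<in>{(S,f) \<in> ww_tableaux k l1 l2. f (1,k) = k+l1+2*l2}.
          (\<lambda>(S,g). (S, g((1,k):=k+l1+2*l2))) ((\<lambda>(S,f). (S, f((1,k):=0))) a) = a"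
    by auto
  show "\<forall>a\<in>ww_tableaux (k-1) l1 l2. (\<lambda>(S,f). (S, f((1,k):=0))) ((\<lambda>(S,g). (S, g((1,k):=k+l1+2*l2))) a) = a"
  proof
    fix a assume a: "a \<in> ww_tableaux (k-1) l1 l2"
    obtain S g where ae: "a = (S,g)" by (cases a)
    have "(S,g) \<in> ww_tableaux (k-1) l1 l2" using a ae by simp
    then obtain z: "\<And>c. c \<notin> ww_cells (k-1) (l1 + l2) S \<Longrightarrow> g c = 0" by (rule W_E) blast
    have "g (1,k) = 0" using k1 by (intro z) simp
    then show "(\<lambda>(S,f). (S, f((1,k):=0))) ((\<lambda>(S,g). (S, g((1,k):=k+l1+2*l2))) a) = a"
      using ae by auto
  qed
  show "(\<lambda>(S,f). (S, f((1,k):=0))) ` {(S,f) \<in> ww_tableaux k l1 l2. f (1,k) = k+l1+2*l2} \<subseteq> ww_tableaux (k-1) l1 l2"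
  proof clarify
    fix S f assume W: "(S,f) \<in> ww_tableaux k l1 l2" and fk: "f (1,k) = k+l1+2*l2"
    from W obtain S1: "S \<subseteq> {1..l1 + l2}" and S2: "card S = l2"
      and b: "bij_betw f (ww_cells k (l1 + l2) S) {1..k + l1 + 2 * l2}"
      and z: "\<And>c. c \<notin> ww_cells k (l1 + l2) S \<Longrightarrow> f c = 0"
      and top: "\<And>i j. 1 \<le> i \<Longrightarrow> i < j \<Longrightarrow> j \<le> k \<Longrightarrow> f (1, i) < f (1, j)"
      and mid: "\<And>i j. 1 \<le> i \<Longrightarrow> i < j \<Longrightarrow> j \<le> l1 + l2 \<Longrightarrow> f (2, i) < f (2, j)"
      and col: "\<And>j. 1 \<le> j \<Longrightarrow> j \<le> k \<Longrightarrow> f (2, j) < f (1, j)"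
      and bot: "\<And>j. j \<in> S \<Longrightarrow> f (3, j) < f (2, j)" by (rule W_E) blast
    let ?C = "ww_cells k (l1 + l2) S"
    have "(1,k) \<in> ?C" using k1 by simp
    from bij_rem[OF b this] fk
    have "bij_betw f (?C - {(1,k)}) ({1..k+l1+2*l2} - {k+l1+2*l2})" by simp
    moreover have "?C - {(1,k)} = ww_cells (k-1) (l1 + l2) S" using k1 by auto
    moreover have "{1..k+l1+2*l2} - {k+l1+2*l2} = {1..(k-1)+l1+2*l2}" using k1 by auto
    ultimately have "bij_betw f (ww_cells (k-1) (l1 + l2) S) {1..(k-1)+l1+2*l2}" by simp
    moreover have "bij_betw (f((1,k):=0)) (ww_cells (k-1) (l1 + l2) S) {1..(k-1)+l1+2*l2}
                 = bij_betw f (ww_cells (k-1) (l1 + l2) S) {1..(k-1)+l1+2*l2}"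
      by (rule bij_betw_cong) auto
    ultimately have b': "bij_betw (f((1,k):=0)) (ww_cells (k-1) (l1 + l2) S) {1..(k-1)+l1+2*l2}" by simp
    show "(S, f((1,k):=0)) \<in> ww_tableaux (k-1) l1 l2"
    proof (rule W_I[OF S1 S2 b'])
      fix c assume "c \<notin> ww_cells (k-1) (l1 + l2) S"
      then have "c = (1,k) \<or> c \<notin> ?C" using k1 by (cases c) auto
      then show "(f((1,k):=0)) c = 0" using z by (metis fun_upd_apply)
    next
      fix i j assume "1 \<le> i" "i < j" "j \<le> k - 1"
      then show "(f((1,k):=0)) (1,i) < (f((1,k):=0)) (1,j)" using top[of i j] by auto
    next
      fix i j assume "1 \<le> i" "i < j" "j \<le> l1 + l2"
      then show "(f((1,k):=0)) (2,i) < (f((1,k):=0)) (2,j)" using mid[of i j] by auto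
    next
      fix j assume "1 \<le> j" "j \<le> k - 1"
      then show "(f((1,k):=0)) (2,j) < (f((1,k):=0)) (1,j)" using col[of j] by auto
    next
      fix j assume "j \<in> S"
      then show "(f((1,k):=0)) (3,j) < (f((1,k):=0)) (2,j)" using bot[of j] by auto
    qed
  qed
  show "(\<lambda>(S,g). (S, g((1,k):=k+l1+2*l2))) ` ww_tableaux (k-1) l1 l2 \<subseteq> {(S,f) \<in> ww_tableaux k l1 l2. f (1,k) = k+l1+2*l2}"
  proof clarify
    fix S g assume W: "(S,g) \<in> ww_tableaux (k-1) l1 l2"
    from W obtain S1: "S \<subseteq> {1..l1 + l2}" and S2: "card S = l2"
      and b: "bij_betw g (ww_cells (k-1) (l1 + l2) S) {1..(k-1) + l1 + 2 * l2}"
      and z: "\<And>c. c \<notin> ww_cells (k-1) (l1 + l2) S \<Longrightarrow> g c = 0"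
      and top: "\<And>i j. 1 \<le> i \<Longrightarrow> i < j \<Longrightarrow> j \<le> k-1 \<Longrightarrow> g (1, i) < g (1, j)"
      and mid: "\<And>i j. 1 \<le> i \<Longrightarrow> i < j \<Longrightarrow> j \<le> l1 + l2 \<Longrightarrow> g (2, i) < g (2, j)"
      and col: "\<And>j. 1 \<le> j \<Longrightarrow> j \<le> k-1 \<Longrightarrow> g (2, j) < g (1, j)"
      and bot: "\<And>j. j \<in> S \<Longrightarrow> g (3, j) < g (2, j)" by (rule W_E) blast
    let ?C = "ww_cells (k-1) (l1 + l2) S"
    let ?n = "k+l1+2*l2"
    have rng: "\<And>c. c \<in> ?C \<Longrightarrow> 1 \<le> g c \<and> g c \<le> ?n - 1" using bij_range[OF b] k1 by fastforce
    have "bij_betw (g((1,k):=?n)) ?C {1..(k-1)+l1+2*l2} = bij_betw g ?C {1..(k-1)+l1+2*l2}"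
      by (rule bij_betw_cong) auto
    with b have "bij_betw (g((1,k):=?n)) ?C {1..(k-1)+l1+2*l2}" by simp
    from bij_ins[OF this, of "(1,k)"]
    have "bij_betw (g((1,k):=?n)) (insert (1,k) ?C) (insert ?n {1..(k-1)+l1+2*l2})" using k1 by auto
    moreover have "insert (1,k) ?C = ww_cells k (l1 + l2) S" using k1 by auto
    moreover have "insert ?n {1..(k-1)+l1+2*l2} = {1..?n}" using k1 by auto
    ultimately have b': "bij_betw (g((1,k):=?n)) (ww_cells k (l1 + l2) S) {1..?n}" by simp
    have "(S, g((1,k):=?n)) \<in> ww_tableaux k l1 l2"
    proof (rule W_I[OF S1 S2 b'])
      fix c assume "c \<notin> ww_cells k (l1 + l2) S"
      then have "c \<noteq> (1,k) \<and> c \<notin> ?C" using k1 by (cases c) auto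
      then show "(g((1,k):=?n)) c = 0" using z by (metis fun_upd_apply)
    next
      fix i j assume ij: "1 \<le> i" "i < j" "j \<le> k"
      show "(g((1,k):=?n)) (1,i) < (g((1,k):=?n)) (1,j)"
      proof (cases "j = k")
        case True
        have "(1,i) \<in> ?C" using ij True by simp
        then have "g (1,i) \<le> ?n - 1" using rng by blast
        then show ?thesis using True k1 ij by simp
      next
        case False
        then show ?thesis using top ij by auto
      qed
    next
      fix i j assume "1 \<le> i" "i < j" "j \<le> l1 + l2"
      then show "(g((1,k):=?n)) (2,i) < (g((1,k):=?n)) (2,j)" using mid[of i j] by auto
    next
      fix j assume ij: "1 \<le> j" "j \<le> k"
      show "(g((1,k):=?n)) (2,j) < (g((1,k):=?n)) (1,j)"
      proof (cases "j = k")
        case True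
        have "(2,j) \<in> ?C" using ij True kN by simp
        then have "g (2,j) \<le> ?n - 1" using rng by blast
        then show ?thesis using True k1 ij by simp
      next
        case False
        then show ?thesis using col ij by auto
      qed
    next
      fix j assume "j \<in> S"
      then show "(g((1,k):=?n)) (3,j) < (g((1,k):=?n)) (2,j)" using bot[of j] by auto
    qed
    then show "(S, g((1,k):=?n)) \<in> ww_tableaux k l1 l2 \<and> (g((1,k):=?n)) (1,k) = ?n" by simp
  qed
qed




lemma B_bij:
  assumes l1: "1 \<le> l1" and kN: "k \<le> l1 + l2 - 1"
  shows "bij_betw (\<lambda>(S,f). (S, f((2,l1+l2):=0)))
           {(S,f) \<in> ww_tableaux k l1 l2. f (2,l1+l2) = k+l1+2*l2 \<and> l1+l2 \<notin> S} (ww_tableaux k (l1-1) l2)"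
proof (rule bij_betw_byWitness[where f'="\<lambda>(S,g). (S, g((2,l1+l2):=k+l1+2*l2))"])
  have e1: "l1 - 1 + l2 = l1 + l2 - 1" and e2: "k + (l1 - 1) + 2 * l2 = k + l1 + 2 * l2 - 1" using l1 by auto
  show "\<forall>a\<in>{(S,f) \<in> ww_tableaux k l1 l2. f (2,l1+l2) = k+l1+2*l2 \<and> l1+l2 \<notin> S}.
          (\<lambda>(S,g). (S, g((2,l1+l2):=k+l1+2*l2))) ((\<lambda>(S,f). (S, f((2,l1+l2):=0))) a) = a"
    by auto
  show "\<forall>a\<in>ww_tableaux k (l1-1) l2. (\<lambda>(S,f). (S, f((2,l1+l2):=0))) ((\<lambda>(S,g). (S, g((2,l1+l2):=k+l1+2*l2))) a) = a"
  proof
    fix a assume a: "a \<in> ww_tableaux k (l1-1) l2"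
    obtain S g where ae: "a = (S,g)" by (cases a)
    have "(S,g) \<in> ww_tableaux k (l1-1) l2" using a ae by simp
    then obtain z: "\<And>c. c \<notin> ww_cells k (l1 - 1 + l2) S \<Longrightarrow> g c = 0" by (rule W_E) blast
    have "g (2,l1+l2) = 0" using l1 by (intro z) simp
    then show "(\<lambda>(S,f). (S, f((2,l1+l2):=0))) ((\<lambda>(S,g). (S, g((2,l1+l2):=k+l1+2*l2))) a) = a"
      using ae by auto
  qed
  show "(\<lambda>(S,f). (S, f((2,l1+l2):=0))) ` {(S,f) \<in> ww_tableaux k l1 l2. f (2,l1+l2) = k+l1+2*l2 \<and> l1+l2 \<notin> S} \<subseteq> ww_tableaux k (l1-1) l2"
  proof clarify
    fix S f assume W: "(S,f) \<in> ww_tableaux k l1 l2" and fk: "f (2,l1+l2) = k+l1+2*l2" and NS: "l1+l2 \<notin> S"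
    from W obtain S1: "S \<subseteq> {1..l1 + l2}" and S2: "card S = l2"
      and b: "bij_betw f (ww_cells k (l1 + l2) S) {1..k + l1 + 2 * l2}"
      and z: "\<And>c. c \<notin> ww_cells k (l1 + l2) S \<Longrightarrow> f c = 0"
      and top: "\<And>i j. 1 \<le> i \<Longrightarrow> i < j \<Longrightarrow> j \<le> k \<Longrightarrow> f (1, i) < f (1, j)"
      and mid: "\<And>i j. 1 \<le> i \<Longrightarrow> i < j \<Longrightarrow> j \<le> l1 + l2 \<Longrightarrow> f (2, i) < f (2, j)"
      and col: "\<And>j. 1 \<le> j \<Longrightarrow> j \<le> k \<Longrightarrow> f (2, j) < f (1, j)"
      and bot: "\<And>j. j \<in> S \<Longrightarrow> f (3, j) < f (2, j)" by (rule W_E) blast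
    let ?C = "ww_cells k (l1 + l2) S"
    let ?C' = "ww_cells k (l1 - 1 + l2) S"
    have "(2,l1+l2) \<in> ?C" using l1 by simp
    from bij_rem[OF b this] fk
    have "bij_betw f (?C - {(2,l1+l2)}) ({1..k+l1+2*l2} - {k+l1+2*l2})" by simp
    moreover have "?C - {(2,l1+l2)} = ?C'" using l1 NS by auto
    moreover have "{1..k+l1+2*l2} - {k+l1+2*l2} = {1..k+(l1-1)+2*l2}" using l1 by auto
    ultimately have "bij_betw f ?C' {1..k+(l1-1)+2*l2}" by simp
    moreover have "bij_betw (f((2,l1+l2):=0)) ?C' {1..k+(l1-1)+2*l2}
                 = bij_betw f ?C' {1..k+(l1-1)+2*l2}"
      by (rule bij_betw_cong) (use l1 in auto)
    ultimately have b': "bij_betw (f((2,l1+l2):=0)) ?C' {1..k+(l1-1)+2*l2}" by simp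
    have S1': "S \<subseteq> {1..l1 - 1 + l2}" 
    proof
      fix t assume "t \<in> S"
      then have "1 \<le> t" "t \<le> l1 + l2" "t \<noteq> l1 + l2" using S1 NS by auto
      then show "t \<in> {1..l1 - 1 + l2}" using l1 by simp
    qed
    show "(S, f((2,l1+l2):=0)) \<in> ww_tableaux k (l1-1) l2"
    proof (rule W_I[OF S1' S2 b'])
      fix c assume "c \<notin> ?C'"
      then have "c = (2,l1+l2) \<or> c \<notin> ?C" using l1 by (cases c) auto
      then show "(f((2,l1+l2):=0)) c = 0" using z by (metis fun_upd_apply)
    next
      fix i j assume "1 \<le> i" "i < j" "j \<le> k"
      then show "(f((2,l1+l2):=0)) (1,i) < (f((2,l1+l2):=0)) (1,j)" using top[of i j] by auto
    next
      fix i j assume "1 \<le> i" "i < j" "j \<le> l1 - 1 + l2"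
      then show "(f((2,l1+l2):=0)) (2,i) < (f((2,l1+l2):=0)) (2,j)" using mid[of i j] l1 by auto
    next
      fix j assume "1 \<le> j" "j \<le> k"
      then show "(f((2,l1+l2):=0)) (2,j) < (f((2,l1+l2):=0)) (1,j)" using col[of j] kN l1 by auto
    next
      fix j assume "j \<in> S"
      then show "(f((2,l1+l2):=0)) (3,j) < (f((2,l1+l2):=0)) (2,j)" using bot[of j] NS by auto
    qed
  qed
  show "(\<lambda>(S,g). (S, g((2,l1+l2):=k+l1+2*l2))) ` ww_tableaux k (l1-1) l2 \<subseteq> {(S,f) \<in> ww_tableaux k l1 l2. f (2,l1+l2) = k+l1+2*l2 \<and> l1+l2 \<notin> S}"
  proof clarify
    fix S g assume W: "(S,g) \<in> ww_tableaux k (l1-1) l2"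
    from W obtain S1: "S \<subseteq> {1..l1 - 1 + l2}" and S2: "card S = l2"
      and b: "bij_betw g (ww_cells k (l1 - 1 + l2) S) {1..k + (l1 - 1) + 2 * l2}"
      and z: "\<And>c. c \<notin> ww_cells k (l1 - 1 + l2) S \<Longrightarrow> g c = 0"
      and top: "\<And>i j. 1 \<le> i \<Longrightarrow> i < j \<Longrightarrow> j \<le> k \<Longrightarrow> g (1, i) < g (1, j)"
      and mid: "\<And>i j. 1 \<le> i \<Longrightarrow> i < j \<Longrightarrow> j \<le> l1 - 1 + l2 \<Longrightarrow> g (2, i) < g (2, j)"
      and col: "\<And>j. 1 \<le> j \<Longrightarrow> j \<le> k \<Longrightarrow> g (2, j) < g (1, j)"
      and bot: "\<And>j. j \<in> S \<Longrightarrow> g (3, j) < g (2, j)" by (rule W_E) blast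
    let ?C = "ww_cells k (l1 - 1 + l2) S"
    let ?n = "k+l1+2*l2"
    have NS: "l1 + l2 \<notin> S" using S1 l1 by auto
    have rng: "\<And>c. c \<in> ?C \<Longrightarrow> 1 \<le> g c \<and> g c \<le> ?n - 1" using bij_range[OF b] l1 by fastforce
    have "bij_betw (g((2,l1+l2):=?n)) ?C {1..k + (l1 - 1) + 2 * l2} = bij_betw g ?C {1..k + (l1 - 1) + 2 * l2}"
      by (rule bij_betw_cong) (use l1 in auto)
    with b have "bij_betw (g((2,l1+l2):=?n)) ?C {1..k + (l1 - 1) + 2 * l2}" by simp
    from bij_ins[OF this, of "(2,l1+l2)"]
    have "bij_betw (g((2,l1+l2):=?n)) (insert (2,l1+l2) ?C) (insert ?n {1..k + (l1 - 1) + 2 * l2})" using l1 by auto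
    moreover have "insert (2,l1+l2) ?C = ww_cells k (l1 + l2) S" using l1 S1 by auto
    moreover have "insert ?n {1..k + (l1 - 1) + 2 * l2} = {1..?n}" using l1 by auto
    ultimately have b': "bij_betw (g((2,l1+l2):=?n)) (ww_cells k (l1 + l2) S) {1..?n}" by simp
    have S1': "S \<subseteq> {1..l1 + l2}" using S1 by force
    have "(S, g((2,l1+l2):=?n)) \<in> ww_tableaux k l1 l2"
    proof (rule W_I[OF S1' S2 b'])
      fix c assume "c \<notin> ww_cells k (l1 + l2) S"
      then have "c \<noteq> (2,l1+l2) \<and> c \<notin> ?C" using l1 by (cases c) auto
      then show "(g((2,l1+l2):=?n)) c = 0" using z by (metis fun_upd_apply)
    next
      fix i j assume "1 \<le> i" "i < j" "j \<le> k"
      then show "(g((2,l1+l2):=?n)) (1,i) < (g((2,l1+l2):=?n)) (1,j)" using top[of i j] by auto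
    next
      fix i j assume ij: "1 \<le> i" "i < j" "j \<le> l1 + l2"
      show "(g((2,l1+l2):=?n)) (2,i) < (g((2,l1+l2):=?n)) (2,j)"
      proof (cases "j = l1 + l2")
        case True
        have "(2,i) \<in> ?C" using ij True by simp
        then have "g (2,i) \<le> ?n - 1" using rng by blast
        then show ?thesis using True l1 ij by simp
      next
        case False
        then show ?thesis using mid[of i j] ij by auto
      qed
    next
      fix j assume "1 \<le> j" "j \<le> k"
      then show "(g((2,l1+l2):=?n)) (2,j) < (g((2,l1+l2):=?n)) (1,j)" using col[of j] kN l1 by auto
    next
      fix j assume "j \<in> S"
      then show "(g((2,l1+l2):=?n)) (3,j) < (g((2,l1+l2):=?n)) (2,j)" using bot[of j] NS by auto
    qed
    then show "(S, g((2,l1+l2):=?n)) \<in> ww_tableaux k l1 l2 \<and> (g((2,l1+l2):=?n)) (2,l1+l2) = ?n \<and> l1+l2 \<notin> S"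
      using NS by simp
  qed
qed




definition PhiC :: "nat \<Rightarrow> nat \<Rightarrow> nat \<Rightarrow> nat set \<times> (nat \<times> nat \<Rightarrow> nat) \<Rightarrow> (nat set \<times> (nat \<times> nat \<Rightarrow> nat)) \<times> nat" where
  "PhiC k l1 l2 = (\<lambda>(S,f). ((S - {l1+l2}, \<lambda>c. if c \<in> ww_cells k (l1+l2-1) (S - {l1+l2}) then hh (f (3,l1+l2)) (f c) else 0), f (3,l1+l2)))"

definition PsiC :: "nat \<Rightarrow> nat \<Rightarrow> nat \<Rightarrow> (nat set \<times> (nat \<times> nat \<Rightarrow> nat)) \<times> nat \<Rightarrow> nat set \<times> (nat \<times> nat \<Rightarrow> nat)" where
  "PsiC k l1 l2 = (\<lambda>((S,g),v). (insert (l1+l2) S, \<lambda>c. if c = (2,l1+l2) then k+l1+2*l2 else if c = (3,l1+l2) then v else ee v (g c)))"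

lemma PhiC_simp: "PhiC k l1 l2 (S,f) = ((S - {l1+l2}, \<lambda>c. if c \<in> ww_cells k (l1+l2-1) (S - {l1+l2}) then hh (f (3,l1+l2)) (f c) else 0), f (3,l1+l2))"
  by (simp add: PhiC_def)

lemma PsiC_simp: "PsiC k l1 l2 ((S,g),v) = (insert (l1+l2) S, \<lambda>c. if c = (2,l1+l2) then k+l1+2*l2 else if c = (3,l1+l2) then v else ee v (g c))"
  by (simp add: PsiC_def)

lemma cells_C: "1 \<le> N \<Longrightarrow> ww_cells k N (insert N S') = insert (2,N) (insert (3,N) (ww_cells k (N-1) S'))"
  by (auto simp: ww_cells_def)

lemma C_fwd:
  assumes l2: "1 \<le> l2" and kN: "k \<le> l1 + l2 - 1"
    and W: "(S,f) \<in> ww_tableaux k l1 l2" and fN: "f (2,l1+l2) = k+l1+2*l2" and NS: "l1+l2 \<in> S"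
  shows "PhiC k l1 l2 (S,f) \<in> ww_tableaux k l1 (l2-1) \<times> {1..k+l1+2*l2-1}"
    and "PsiC k l1 l2 (PhiC k l1 l2 (S,f)) = (S,f)"
proof -
  from W obtain S1: "S \<subseteq> {1..l1 + l2}" and S2: "card S = l2"
      and b: "bij_betw f (ww_cells k (l1 + l2) S) {1..k + l1 + 2 * l2}"
      and z: "\<And>c. c \<notin> ww_cells k (l1 + l2) S \<Longrightarrow> f c = 0"
      and top: "\<And>i j. 1 \<le> i \<Longrightarrow> i < j \<Longrightarrow> j \<le> k \<Longrightarrow> f (1, i) < f (1, j)"
      and mid: "\<And>i j. 1 \<le> i \<Longrightarrow> i < j \<Longrightarrow> j \<le> l1 + l2 \<Longrightarrow> f (2, i) < f (2, j)"
      and col: "\<And>j. 1 \<le> j \<Longrightarrow> j \<le> k \<Longrightarrow> f (2, j) < f (1, j)"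
      and bot: "\<And>j. j \<in> S \<Longrightarrow> f (3, j) < f (2, j)" by (rule W_E) blast
  define N where "N = l1 + l2"
  define n where "n = k + l1 + 2 * l2"
  define v where "v = f (3,N)"
  define S' where "S' = S - {N}"
  define C where "C = ww_cells k N S"
  define C' where "C' = ww_cells k (N-1) S'"
  define G where "G = (\<lambda>c. if c \<in> C' then hh v (f c) else 0)"
  have N1: "1 \<le> N" using l2 N_def by simp
  have SS': "S = insert N S'" using NS S'_def N_def by auto
  have NS': "N \<notin> S'" using S'_def by simp
  have CC': "C = insert (2,N) (insert (3,N) C')" unfolding C_def C'_def SS' using cells_C[OF N1] by simp
  have n2: "(2,N) \<notin> C'" "(3,N) \<notin> C'" using NS' unfolding C'_def by auto
  have b1: "bij_betw f C {1..n}" using b unfolding C_def n_def N_def .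
  have fN': "f (2,N) = n" using fN N_def n_def by simp
  have v1: "1 \<le> v \<and> v \<le> n" using bij_range[OF b1, of "(3,N)"] CC' v_def by simp
  have vn: "v \<noteq> n" using bij_inj[OF b1, of "(3,N)" "(2,N)"] CC' v_def fN' by simp
  have fv: "\<And>c. c \<in> C' \<Longrightarrow> f c \<noteq> v" using bij_inj[OF b1, of _ "(3,N)"] CC' n2 v_def by auto
  have "bij_betw f (C - {(2,N)}) ({1..n} - {n})" using bij_rem[OF b1, of "(2,N)"] CC' fN' by simp
  then have "bij_betw f (C - {(2,N)} - {(3,N)}) ({1..n} - {n} - {v})" using bij_rem[of f "C - {(2,N)}" _ "(3,N)"] CC' v_def by simp
  moreover have "C - {(2,N)} - {(3,N)} = C'" using CC' n2 by auto
  moreover have "{1..n} - {n} - {v} = {1..n-1} - {v}" by auto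
  ultimately have "bij_betw f C' ({1..n-1} - {v})" by simp
  from bij_betw_trans[OF this hh_bij[of v "n-1"]] v1 vn
  have "bij_betw (hh v \<circ> f) C' {1..n-1-1}" by (simp; linarith)
  moreover have "bij_betw G C' {1..n-1-1} = bij_betw (hh v \<circ> f) C' {1..n-1-1}"
    by (rule bij_betw_cong) (simp add: G_def)
  moreover have eqn: "k + l1 + 2 * (l2 - 1) = n-1-1" using l2 n_def by simp
  ultimately have bG: "bij_betw G C' {1..k + l1 + 2 * (l2 - 1)}" unfolding eqn by simp
  have mono: "\<And>c d. c \<in> C' \<Longrightarrow> d \<in> C' \<Longrightarrow> f c < f d \<Longrightarrow> G c < G d"
    using fv hh_mono unfolding G_def by auto
  have cellsC': "\<And>a b. (a,b) \<in> C' \<longleftrightarrow> (a=1 \<and> 1\<le>b \<and> b\<le>k) \<or> (a=2 \<and> 1\<le>b \<and> b\<le>N-1) \<or> (a=3 \<and> b\<in>S')"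
    unfolding C'_def by simp
  have S'1: "S' \<subseteq> {1..l1 + (l2 - 1)}"
  proof
    fix t assume "t \<in> S'"
    then have "1 \<le> t" "t \<le> N" "t \<noteq> N" using S1 S'_def N_def by auto
    then show "t \<in> {1..l1 + (l2 - 1)}" using l2 N_def by simp
  qed
  have S'2: "card S' = l2 - 1" using S2 NS S1 S'_def N_def by (simp add: finite_subset)
  have C'eq: "C' = ww_cells k (l1 + (l2 - 1)) S'" using C'_def N_def l2 by simp
  have "(S', G) \<in> ww_tableaux k l1 (l2 - 1)"
  proof (rule W_I[OF S'1 S'2])
    show "bij_betw G (ww_cells k (l1 + (l2 - 1)) S') {1..k + l1 + 2 * (l2 - 1)}" using bG C'eq by simp
  next
    fix c assume "c \<notin> ww_cells k (l1 + (l2 - 1)) S'"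
    then show "G c = 0" using C'eq G_def by simp
  next
    fix i j assume "1 \<le> i" "i < j" "j \<le> k"
    then show "G (1,i) < G (1,j)" using mono[of "(1,i)" "(1,j)"] top[of i j] cellsC' by simp
  next
    fix i j assume "1 \<le> i" "i < j" "j \<le> l1 + (l2 - 1)"
    then show "G (2,i) < G (2,j)" using mono[of "(2,i)" "(2,j)"] mid[of i j] cellsC' N_def l2 by simp
  next
    fix j assume "1 \<le> j" "j \<le> k"
    then show "G (2,j) < G (1,j)" using mono[of "(2,j)" "(1,j)"] col[of j] cellsC' kN N_def by simp
  next
    fix j assume j: "j \<in> S'"
    then have "1 \<le> j" "j \<le> N - 1" using S'1 N_def l2 by auto
    then show "G (3,j) < G (2,j)" using j mono[of "(3,j)" "(2,j)"] bot[of j] cellsC' S'_def by simp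
  qed
  moreover have "PhiC k l1 l2 (S,f) = ((S', G), v)"
    unfolding PhiC_simp G_def C'_def S'_def v_def N_def by simp
  ultimately show "PhiC k l1 l2 (S,f) \<in> ww_tableaux k l1 (l2-1) \<times> {1..k+l1+2*l2-1}"
    using v1 vn n_def by (simp; linarith)
  have "PsiC k l1 l2 ((S', G), v) = (S, f)"
  proof -
    have "(\<lambda>c. if c = (2,N) then n else if c = (3,N) then v else ee v (G c)) = f"
    proof
      fix c
      show "(if c = (2,N) then n else if c = (3,N) then v else ee v (G c)) = f c"
      proof (cases "c \<in> C'")
        case True
        then show ?thesis using n2 fv[OF True] ee_hh G_def by auto
      next
        case False
        then show ?thesis using fN' v_def G_def ee_0 v1 z[of c, folded N_def] CC' C_def by auto
      qed
    qed
    then show ?thesis unfolding PsiC_simp N_def[symmetric] n_def[symmetric] using SS' by simp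
  qed
  with \<open>PhiC k l1 l2 (S,f) = ((S', G), v)\<close> show "PsiC k l1 l2 (PhiC k l1 l2 (S,f)) = (S,f)" by simp
qed


lemma C_bwd:
  assumes l2: "1 \<le> l2" and kN: "k \<le> l1 + l2 - 1"
    and W: "(S',g) \<in> ww_tableaux k l1 (l2-1)" and v: "v \<in> {1..k+l1+2*l2-1}"
  shows "PsiC k l1 l2 ((S',g),v) \<in> {(S,f) \<in> ww_tableaux k l1 l2. f (2,l1+l2) = k+l1+2*l2 \<and> l1+l2 \<in> S}"
    and "PhiC k l1 l2 (PsiC k l1 l2 ((S',g),v)) = ((S',g),v)"
proof -
  from W obtain S1: "S' \<subseteq> {1..l1 + (l2-1)}" and S2: "card S' = l2 - 1"
      and b: "bij_betw g (ww_cells k (l1 + (l2-1)) S') {1..k + l1 + 2 * (l2-1)}"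
      and z: "\<And>c. c \<notin> ww_cells k (l1 + (l2-1)) S' \<Longrightarrow> g c = 0"
      and top: "\<And>i j. 1 \<le> i \<Longrightarrow> i < j \<Longrightarrow> j \<le> k \<Longrightarrow> g (1, i) < g (1, j)"
      and mid: "\<And>i j. 1 \<le> i \<Longrightarrow> i < j \<Longrightarrow> j \<le> l1 + (l2-1) \<Longrightarrow> g (2, i) < g (2, j)"
      and col: "\<And>j. 1 \<le> j \<Longrightarrow> j \<le> k \<Longrightarrow> g (2, j) < g (1, j)"
      and bot: "\<And>j. j \<in> S' \<Longrightarrow> g (3, j) < g (2, j)" by (rule W_E) blast
  define N where "N = l1 + l2"
  define n where "n = k + l1 + 2 * l2"
  define S where "S = insert N S'"
  define C where "C = ww_cells k N S"
  define C' where "C' = ww_cells k (N-1) S'"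
  define F where "F = (\<lambda>c. if c = (2,N) then n else if c = (3,N) then v else ee v (g c))"
  have N1: "1 \<le> N" using l2 N_def by simp
  have eN: "l1 + (l2-1) = N - 1" using l2 N_def by simp
  have en: "k + l1 + 2 * (l2-1) = n - 1 - 1" using l2 n_def by simp
  have NS': "N \<notin> S'" using S1 eN N1 by auto
  have CC': "C = insert (2,N) (insert (3,N) C')" unfolding C_def C'_def S_def using cells_C[OF N1] by simp
  have n2: "(2,N) \<notin> C'" "(3,N) \<notin> C'" using NS' N1 unfolding C'_def by auto
  have b1: "bij_betw g C' {1..n-1-1}" using b unfolding C'_def eN en .
  have v1: "1 \<le> v" "v \<le> n - 1" using v n_def by auto
  have n1: "2 \<le> n" using v1 by linarith
  have rng: "\<And>c. c \<in> C' \<Longrightarrow> 1 \<le> g c \<and> g c \<le> n-1-1" using bij_range[OF b1] by blast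
  from bij_betw_trans[OF b1 ee_bij[of v "n-1"]] v1
  have "bij_betw (ee v \<circ> g) C' ({1..n-1} - {v})" by simp
  moreover have "bij_betw F C' ({1..n-1} - {v}) = bij_betw (ee v \<circ> g) C' ({1..n-1} - {v})"
    by (rule bij_betw_cong) (use n2 in \<open>auto simp: F_def\<close>)
  ultimately have "bij_betw F C' ({1..n-1} - {v})" by simp
  from bij_ins[OF this, of "(3,N)"] n2
  have "bij_betw F (insert (3,N) C') (insert v ({1..n-1} - {v}))" by (simp add: F_def)
  moreover have "insert v ({1..n-1} - {v}) = {1..n-1}" using v1 by auto
  ultimately have "bij_betw F (insert (3,N) C') {1..n-1}" by simp
  from bij_ins[OF this, of "(2,N)"] n2 n1
  have "bij_betw F (insert (2,N) (insert (3,N) C')) (insert n {1..n-1})" by (simp add: F_def)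
  moreover have "insert n {1..n-1} = {1..n}" using v1 by auto
  ultimately have bF: "bij_betw F C {1..n}" using CC' by simp
  have mono: "\<And>c d. c \<in> C' \<Longrightarrow> d \<in> C' \<Longrightarrow> g c < g d \<Longrightarrow> F c < F d"
    using n2 ee_mono unfolding F_def by auto
  have Fle: "\<And>c. c \<in> C' \<Longrightarrow> F c < n"
  proof -
    fix c assume c: "c \<in> C'"
    have "F c = ee v (g c)" using c n2 F_def by auto
    also have "\<dots> \<le> g c + 1" by (rule ee_le)
    also have "\<dots> < n" using rng[OF c] by linarith
    finally show "F c < n" .
  qed
  have cellsC': "\<And>a b. (a,b) \<in> C' \<longleftrightarrow> (a=1 \<and> 1\<le>b \<and> b\<le>k) \<or> (a=2 \<and> 1\<le>b \<and> b\<le>N-1) \<or> (a=3 \<and> b\<in>S')"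
    unfolding C'_def by simp
  have S'b: "\<And>j. j \<in> S' \<Longrightarrow> 1 \<le> j \<and> j \<le> N - 1" using S1 eN by auto
  have SS1: "S \<subseteq> {1..l1 + l2}" using S'b N1 N_def S_def by force
  have SS2: "card S = l2" using S2 NS' S_def l2 finite_subset[OF S1] by simp
  have "(S, F) \<in> ww_tableaux k l1 l2"
  proof (rule W_I[OF SS1 SS2])
    show "bij_betw F (ww_cells k (l1 + l2) S) {1..k + l1 + 2 * l2}" using bF C_def N_def n_def by simp
  next
    fix c assume "c \<notin> ww_cells k (l1 + l2) S"
    then have "c \<noteq> (2,N)" "c \<noteq> (3,N)" "c \<notin> C'" using CC' C_def N_def by auto
    then show "F c = 0" using z[of c] eN C'_def F_def ee_0 v1 by simp
  next
    fix i j assume "1 \<le> i" "i < j" "j \<le> k"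
    then show "F (1,i) < F (1,j)" using mono[of "(1,i)" "(1,j)"] top[of i j] cellsC' by simp
  next
    fix i j assume ij: "1 \<le> i" "i < j" "j \<le> l1 + l2"
    show "F (2,i) < F (2,j)"
    proof (cases "j = N")
      case True
      then show ?thesis using Fle[of "(2,i)"] cellsC' ij F_def by simp
    next
      case False
      then show ?thesis using mono[of "(2,i)" "(2,j)"] mid[of i j] cellsC' ij eN N_def by simp
    qed
  next
    fix j assume "1 \<le> j" "j \<le> k"
    then show "F (2,j) < F (1,j)" using mono[of "(2,j)" "(1,j)"] col[of j] cellsC' kN N_def by simp
  next
    fix j assume j: "j \<in> S"
    show "F (3,j) < F (2,j)"
    proof (cases "j = N")
      case True
      then show ?thesis using v1 F_def by simp
    next
      case False
      then have "j \<in> S'" using j S_def by simp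
      then show ?thesis using S'b[of j] mono[of "(3,j)" "(2,j)"] bot[of j] cellsC' by simp
    qed
  qed
  moreover have PE: "PsiC k l1 l2 ((S',g),v) = (S, F)"
    unfolding PsiC_simp F_def S_def N_def n_def by simp
  ultimately show "PsiC k l1 l2 ((S',g),v) \<in> {(S,f) \<in> ww_tableaux k l1 l2. f (2,l1+l2) = k+l1+2*l2 \<and> l1+l2 \<in> S}"
    using F_def S_def N_def n_def by simp
  have h1: "S - {N} = S'" using S_def NS' by simp
  have h2: "F (3,N) = v" using F_def by simp
  have h3: "(\<lambda>c. if c \<in> C' then hh v (F c) else 0) = g"
  proof
    fix c
    show "(if c \<in> C' then hh v (F c) else 0) = g c"
    proof (cases "c \<in> C'")
      case True
      then show ?thesis using n2 hh_ee F_def by auto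
    next
      case False
      then show ?thesis using z[of c] eN C'_def by simp
    qed
  qed
  show "PhiC k l1 l2 (PsiC k l1 l2 ((S',g),v)) = ((S',g),v)"
    unfolding PE PhiC_simp N_def[symmetric] h1 h2 C'_def[symmetric] h3 by simp
qed




lemma max_cell:
  assumes k1: "1 \<le> k" and kN: "k \<le> l1 + l2" and W: "(S,f) \<in> ww_tableaux k l1 l2"
  shows "f (1,k) = k+l1+2*l2 \<or> f (2,l1+l2) = k+l1+2*l2"
proof -
  from W obtain S1: "S \<subseteq> {1..l1 + l2}"
      and b: "bij_betw f (ww_cells k (l1 + l2) S) {1..k + l1 + 2 * l2}"
      and top: "\<And>i j. 1 \<le> i \<Longrightarrow> i < j \<Longrightarrow> j \<le> k \<Longrightarrow> f (1, i) < f (1, j)"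
      and mid: "\<And>i j. 1 \<le> i \<Longrightarrow> i < j \<Longrightarrow> j \<le> l1 + l2 \<Longrightarrow> f (2, i) < f (2, j)"
      and bot: "\<And>j. j \<in> S \<Longrightarrow> f (3, j) < f (2, j)" by (rule W_E) blast
  let ?n = "k+l1+2*l2"
  let ?C = "ww_cells k (l1 + l2) S"
  have r: "\<And>c. c \<in> ?C \<Longrightarrow> f c \<le> ?n" using bij_range[OF b] by blast
  obtain c where c: "c \<in> ?C" "f c = ?n" using bij_surj[OF b, of ?n] k1 by auto
  obtain a j where cj: "c = (a,j)" by (cases c)
  show ?thesis
  proof (cases "a = 1")
    case True
    then have j: "1 \<le> j" "j \<le> k" using c cj by auto
    have "\<not> j < k"
    proof
      assume "j < k"
      then have "f (1,j) < f (1,k)" using top j by blast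
      moreover have "f (1,k) \<le> ?n" using r k1 by simp
      ultimately show False using c cj True by simp
    qed
    then show ?thesis using c cj True j by simp
  next
    case a1: False
    show ?thesis
    proof (cases "a = 2")
      case True
      then have j: "1 \<le> j" "j \<le> l1 + l2" using c cj by auto
      have "\<not> j < l1 + l2"
      proof
        assume "j < l1 + l2"
        then have "f (2,j) < f (2,l1+l2)" using mid j by blast
        moreover have "f (2,l1+l2) \<le> ?n" using r k1 kN by simp
        ultimately show False using c cj True by simp
      qed
      then show ?thesis using c cj True j by simp
    next
      case False
      then have a3: "a = 3" "j \<in> S" using a1 c cj by auto
      then have "f (3,j) < f (2,j)" using bot by blast
      moreover have "f (2,j) \<le> ?n" using r a3 S1 by auto
      ultimately show ?thesis using c cj a3 by simp
    qed
  qed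
qed

lemma top_not_max:
  assumes k1: "1 \<le> k" and kN: "k \<le> l1 + l2" and W: "(S,f) \<in> ww_tableaux k l1 l2" and fN: "f (2,l1+l2) = k+l1+2*l2"
  shows "k \<le> l1 + l2 - 1"
proof (rule ccontr)
  assume a: "\<not> k \<le> l1 + l2 - 1"
  then have True: "k = l1 + l2" using kN by linarith
  from W obtain
      b: "bij_betw f (ww_cells k (l1 + l2) S) {1..k + l1 + 2 * l2}"
      and col: "\<And>j. 1 \<le> j \<Longrightarrow> j \<le> k \<Longrightarrow> f (2, j) < f (1, j)" by (rule W_E) blast
  have "f (2,k) < f (1,k)" using col k1 by blast
  moreover have "f (1,k) \<le> k+l1+2*l2" using bij_range[OF b, of "(1,k)"] k1 by simp
  ultimately show False using fN True by simp
qed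


lemma main_nat:
  assumes k1: "1 \<le> k" and kN: "k \<le> l1 + l2"
  shows "card (ww_tableaux k l1 l2) = card (ww_tableaux (k-1) l1 l2)
     + (if 1 \<le> l1 \<and> k \<le> l1+l2-1 then card (ww_tableaux k (l1-1) l2) else 0)
     + (if 1 \<le> l2 \<and> k \<le> l1+l2-1 then (k+l1+2*l2-1) * card (ww_tableaux k l1 (l2-1)) else 0)"
proof -
  define A where "A = {(S,f) \<in> ww_tableaux k l1 l2. f (1,k) = k+l1+2*l2}"
  define B where "B = {(S,f) \<in> ww_tableaux k l1 l2. f (2,l1+l2) = k+l1+2*l2 \<and> l1+l2 \<notin> S}"
  define Cs where "Cs = {(S,f) \<in> ww_tableaux k l1 l2. f (2,l1+l2) = k+l1+2*l2 \<and> l1+l2 \<in> S}"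
  have Wu: "ww_tableaux k l1 l2 = A \<union> B \<union> Cs"
  proof
    show "ww_tableaux k l1 l2 \<subseteq> A \<union> B \<union> Cs"
    proof
      fix p assume p: "p \<in> ww_tableaux k l1 l2"
      obtain S f where pe: "p = (S,f)" by (cases p)
      show "p \<in> A \<union> B \<union> Cs" using max_cell[OF k1 kN, of S f] p pe unfolding A_def B_def Cs_def by auto
    qed
  qed (auto simp: A_def B_def Cs_def)
  have fin: "finite A" "finite B" "finite Cs" using W_finite[of k l1 l2] unfolding A_def B_def Cs_def
    by (auto intro: finite_subset)
  have d1: "A \<inter> B = {}" "(A \<union> B) \<inter> Cs = {}"
  proof -
    have ne: "f (1,k) \<noteq> f (2,l1+l2)" if "(S,f) \<in> ww_tableaux k l1 l2" for S f
    proof -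
      from that obtain b: "bij_betw f (ww_cells k (l1 + l2) S) {1..k + l1 + 2 * l2}" by (rule W_E) blast
      show ?thesis by (rule bij_inj[OF b]) (use k1 kN in auto)
    qed
    show "A \<inter> B = {}" unfolding A_def B_def by (auto dest!: ne)
    show "(A \<union> B) \<inter> Cs = {}" unfolding A_def B_def Cs_def by (auto dest!: ne)
  qed
  have cW: "card (ww_tableaux k l1 l2) = card A + card B + card Cs"
    unfolding Wu using fin d1 by (simp add: card_Un_disjoint)
  have cA: "card A = card (ww_tableaux (k-1) l1 l2)"
    unfolding A_def using A_bij[OF k1 kN] by (rule bij_betw_same_card)
  have cB: "card B = (if 1 \<le> l1 \<and> k \<le> l1+l2-1 then card (ww_tableaux k (l1-1) l2) else 0)"
  proof (cases "1 \<le> l1 \<and> k \<le> l1+l2-1")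
    case True
    then show ?thesis unfolding B_def using B_bij[of l1 k l2] by (simp add: bij_betw_same_card)
  next
    case False
    have "B = {}"
    proof (rule ccontr)
      assume "B \<noteq> {}"
      then obtain S f where Sf: "(S,f) \<in> ww_tableaux k l1 l2" "f (2,l1+l2) = k+l1+2*l2" "l1+l2 \<notin> S"
        unfolding B_def by auto
      have kk: "k \<le> l1+l2-1" using top_not_max[OF k1 kN Sf(1,2)] .
      then have l10: "l1 = 0" using False by simp
      from Sf(1) obtain S1: "S \<subseteq> {1..l1 + l2}" and S2: "card S = l2" by (rule W_E) blast
      have "S = {1..l1+l2}" using card_subset_eq[OF _ S1] S2 l10 by simp
      then show False using Sf(3) k1 kN by simp
    qed
    then show ?thesis using False by auto
  qed
  have cC: "card Cs = (if 1 \<le> l2 \<and> k \<le> l1+l2-1 then (k+l1+2*l2-1) * card (ww_tableaux k l1 (l2-1)) else 0)"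
  proof (cases "1 \<le> l2 \<and> k \<le> l1+l2-1")
    case True
    then have l2: "1 \<le> l2" and kk: "k \<le> l1+l2-1" by auto
    have "bij_betw (PhiC k l1 l2) Cs (ww_tableaux k l1 (l2-1) \<times> {1..k+l1+2*l2-1})"
    proof (rule bij_betw_byWitness[where f'="PsiC k l1 l2"])
      show "\<forall>a\<in>Cs. PsiC k l1 l2 (PhiC k l1 l2 a) = a"
        unfolding Cs_def using C_fwd(2)[OF l2 kk] by auto
      show "\<forall>a'\<in>ww_tableaux k l1 (l2-1) \<times> {1..k+l1+2*l2-1}. PhiC k l1 l2 (PsiC k l1 l2 a') = a'"
        using C_bwd(2)[OF l2 kk] by auto
      show "PhiC k l1 l2 ` Cs \<subseteq> ww_tableaux k l1 (l2-1) \<times> {1..k+l1+2*l2-1}"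
      proof (rule image_subsetI)
        fix p assume "p \<in> Cs"
        then obtain S f where "p = (S,f)" "(S,f) \<in> ww_tableaux k l1 l2" "f (2,l1+l2) = k+l1+2*l2" "l1+l2 \<in> S"
          unfolding Cs_def by auto
        then show "PhiC k l1 l2 p \<in> ww_tableaux k l1 (l2-1) \<times> {1..k+l1+2*l2-1}"
          using C_fwd(1)[OF l2 kk] by blast
      qed
      show "PsiC k l1 l2 ` (ww_tableaux k l1 (l2-1) \<times> {1..k+l1+2*l2-1}) \<subseteq> Cs"
      proof (rule image_subsetI)
        fix p assume "p \<in> ww_tableaux k l1 (l2-1) \<times> {1..k+l1+2*l2-1}"
        then obtain S g v where "p = ((S,g),v)" "(S,g) \<in> ww_tableaux k l1 (l2-1)" "v \<in> {1..k+l1+2*l2-1}"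
          by auto
        then show "PsiC k l1 l2 p \<in> Cs"
          unfolding Cs_def using C_bwd(1)[OF l2 kk] by simp
      qed
    qed
    then have "card Cs = card (ww_tableaux k l1 (l2-1) \<times> {1..k+l1+2*l2-1})" by (rule bij_betw_same_card)
    then show ?thesis using True by (simp add: card_cartesian_product W_finite)
  next
    case False
    have "Cs = {}"
    proof (rule ccontr)
      assume "Cs \<noteq> {}"
      then obtain S f where Sf: "(S,f) \<in> ww_tableaux k l1 l2" "f (2,l1+l2) = k+l1+2*l2" "l1+l2 \<in> S"
        unfolding Cs_def by auto
      have kk: "k \<le> l1+l2-1" using top_not_max[OF k1 kN Sf(1,2)] .
      then have l20: "l2 = 0" using False by simp
      from Sf(1) obtain S1: "S \<subseteq> {1..l1 + l2}" and S2: "card S = l2" by (rule W_E) blast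
      have "S = {}" using S2 l20 finite_subset[OF S1] by simp
      then show False using Sf(3) by simp
    qed
    then show ?thesis using False by auto
  qed
  show ?thesis using cW cA cB cC by simp
qed




lemma y000: "y 0 0 0 = 1"
proof -
  have "ww_tableaux 0 0 0 = {({}, \<lambda>_. 0)}"
  proof
    show "ww_tableaux 0 0 0 \<subseteq> {({}, \<lambda>_. 0)}"
    proof
      fix p assume p: "p \<in> ww_tableaux 0 0 0"
      obtain S f where pe: "p = (S,f)" by (cases p)
      from p pe obtain S1: "S \<subseteq> {1..0 + 0}" and z: "\<And>c. c \<notin> ww_cells 0 (0 + 0) S \<Longrightarrow> f c = 0"
        by (auto elim: W_E)
      have S0: "S = {}" using S1 by simp
      have "f = (\<lambda>_. 0)"
      proof
        fix c show "f c = 0" using z[of c] S0 by (cases c) simp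
      qed
      then show "p \<in> {({}, \<lambda>_. 0)}" using pe S0 by simp
    qed
    show "{({}, \<lambda>_. 0)} \<subseteq> ww_tableaux 0 0 0"
    proof -
      have e: "ww_cells 0 0 {} = {}" by (auto simp: ww_cells_def)
      have "({}, \<lambda>_. 0) \<in> ww_tableaux 0 0 0"
        by (rule W_I) (auto simp: e bij_betw_def)
      then show ?thesis by simp
    qed
  qed
  then show ?thesis by (simp add: y_def)
qed

theorem lemma10:
  fixes k l1 l2 :: int
  assumes "0 \<le> l1" and "0 \<le> l2" and "0 < k" and "k \<le> l1 + l2"
  shows "int (y k l1 l2) = int (y (k - 1) l1 l2) + int (y k (l1 - 1) l2)
           + (2 * l2 + l1 + k - 1) * int (y k l1 (l2 - 1))
         \<and> y 0 0 0 = 1"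
proof -
  obtain K L1 L2 where e: "k = int K" "l1 = int L1" "l2 = int L2"
    using assms by (metis nonneg_int_cases less_imp_le)
  have K1: "1 \<le> K" and KN: "K \<le> L1 + L2" using assms e by auto
  have y1: "y k l1 l2 = card (ww_tableaux K L1 L2)" using e KN by (simp add: y_def)
  have y2: "y (k-1) l1 l2 = card (ww_tableaux (K-1) L1 L2)"
  proof -
    have h: "nat (int K - 1) = K - 1" using K1 by linarith
    show ?thesis using e KN K1 by (simp add: y_def h)
  qed
  have y3: "y k (l1-1) l2 = (if 1 \<le> L1 \<and> K \<le> L1+L2-1 then card (ww_tableaux K (L1-1) L2) else 0)"
  proof (cases "1 \<le> L1")
    case True
    have h: "nat (int L1 - 1) = L1 - 1" using True by linarith
    show ?thesis using e True K1 by (simp add: y_def h) linarith?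
  next
    case False
    then show ?thesis using e by (simp add: y_def)
  qed
  have y4: "y k l1 (l2-1) = (if 1 \<le> L2 \<and> K \<le> L1+L2-1 then card (ww_tableaux K L1 (L2-1)) else 0)"
  proof (cases "1 \<le> L2")
    case True
    have h: "nat (int L2 - 1) = L2 - 1" using True by linarith
    show ?thesis using e True K1 by (simp add: y_def h) linarith?
  next
    case False
    then show ?thesis using e by (simp add: y_def)
  qed
  have M: "card (ww_tableaux K L1 L2) = card (ww_tableaux (K-1) L1 L2)
     + (if 1 \<le> L1 \<and> K \<le> L1+L2-1 then card (ww_tableaux K (L1-1) L2) else 0)
     + (if 1 \<le> L2 \<and> K \<le> L1+L2-1 then (K+L1+2*L2-1) * card (ww_tableaux K L1 (L2-1)) else 0)"
    by (rule main_nat[OF K1 KN])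
  have "int (K+L1+2*L2-1) = 2 * l2 + l1 + k - 1" using e K1 by simp
  then have "int (y k l1 l2) = int (y (k - 1) l1 l2) + int (y k (l1 - 1) l2)
           + (2 * l2 + l1 + k - 1) * int (y k l1 (l2 - 1))"
    unfolding y1 y2 y3 y4 M by (simp only: of_nat_add of_nat_mult) (auto)
  then show ?thesis using y000 by simp
qed


end
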